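(* If all agents have super-additive valuations, then there exists a mechanism that makes a polynomial number (in $n$ and $m$) of value queries and outputs a combinatorial Walrasian equilibrium (CWE) outcome whose social welfare is within a factor $O(m/\sqrt{\log m})$ of the optimal social welfare.
   Context: $M$ is a finite set of $m$ indivisible items and $[n]$ a set of agents with monotone valuations $v_i:2^M\to\mathbb{R}_{\ge0}$, $v_i(\emptyset)=0$; super-additive means $v(S\cup T)\ge v(S)+v(T)$ for disjoint $S,T$. An allocation is a tuple $(x_0,\dots,x_n)$ of pairwise disjoint sets with union $M$ ($x_0$ unallocated). An allocation with prices $p_k\ge 0$ for each nonempty bundle $x_k$ is a CWE outcome if for every agent $i$ and every set $T$ of indices of nonempty bundles, $u_i\ge v_i(\bigcup_{k\in T}x_k)-\sum_{k\in T}p_k$, where $u_i=v_i(x_i)-p_i$ if $x_i\neq\emptyset$ and $0$ otherwise. A value query asks an agent $i$ for $v_i(S)$ for a given set $S$. Social welfare is $\sum_{i=1}^n v_i(x_i)$. *)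

theory Defs
  imports Complex_Main
begin

text \<open>Items are M = {0..<m}; agents are 1..n; bundle index 0 is the unallocated bundle.
  A valuation profile is v :: nat => nat set => real, with v i the valuation of agent i.\<close>

type_synonym valuations = "nat \<Rightarrow> nat set \<Rightarrow> real"
type_synonym allocation = "nat \<Rightarrow> nat set"
type_synonym prices = "nat \<Rightarrow> real"

definition items :: "nat \<Rightarrow> nat set" where
  "items m = {0..<m}"

definition valuation :: "nat \<Rightarrow> (nat set \<Rightarrow> real) \<Rightarrow> bool" where
  "valuation m w \<longleftrightarrow> w {} = 0 \<and> (\<forall>S \<subseteq> items m. w S \<ge> 0)
     \<and> (\<forall>S T. S \<subseteq> T \<and> T \<subseteq> items m \<longrightarrow> w S \<le> w T)"

definition super_additive :: "nat \<Rightarrow> (nat set \<Rightarrow> real) \<Rightarrow> bool" where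
  "super_additive m w \<longleftrightarrow>
     (\<forall>S T. S \<subseteq> items m \<and> T \<subseteq> items m \<and> S \<inter> T = {} \<longrightarrow> w (S \<union> T) \<ge> w S + w T)"

definition is_allocation :: "nat \<Rightarrow> nat \<Rightarrow> allocation \<Rightarrow> bool" where
  "is_allocation n m x \<longleftrightarrow>
     (\<forall>k\<in>{0..n}. \<forall>l\<in>{0..n}. k \<noteq> l \<longrightarrow> x k \<inter> x l = {}) \<and> (\<Union>k\<in>{0..n}. x k) = items m"

definition utility :: "valuations \<Rightarrow> allocation \<Rightarrow> prices \<Rightarrow> nat \<Rightarrow> real" where
  "utility v x p i = (if x i \<noteq> {} then v i (x i) - p i else 0)"

definition is_CWE :: "nat \<Rightarrow> nat \<Rightarrow> valuations \<Rightarrow> allocation \<Rightarrow> prices \<Rightarrow> bool" where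
  "is_CWE n m v x p \<longleftrightarrow> is_allocation n m x
     \<and> (\<forall>k\<in>{0..n}. x k \<noteq> {} \<longrightarrow> p k \<ge> 0)
     \<and> (\<forall>i\<in>{1..n}. \<forall>T. T \<subseteq> {k\<in>{0..n}. x k \<noteq> {}} \<longrightarrow>
          utility v x p i \<ge> v i (\<Union>k\<in>T. x k) - (\<Sum>k\<in>T. p k))"

definition social_welfare :: "nat \<Rightarrow> valuations \<Rightarrow> allocation \<Rightarrow> real" where
  "social_welfare n v x = (\<Sum>i=1..n. v i (x i))"

text \<open>Deterministic value-query algorithms as decision trees: a node asks agent i for v i S
  and branches on the answer; a leaf outputs an allocation with prices.\<close>

datatype qtree = Output allocation prices | Query nat "nat set" "real \<Rightarrow> qtree"

primrec run :: "valuations \<Rightarrow> qtree \<Rightarrow> allocation \<times> prices" where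
  "run v (Output x p) = (x, p)"
| "run v (Query i S f) = run v (f (v i S))"

primrec num_queries :: "valuations \<Rightarrow> qtree \<Rightarrow> nat" where
  "num_queries v (Output x p) = 0"
| "num_queries v (Query i S f) = Suc (num_queries v (f (v i S)))"

end

theory Submission
  imports Defs "HOL-Library.FuncSet"
begin


fun qs :: "(nat \<times> nat set) list \<Rightarrow> valuations \<Rightarrow> (valuations \<Rightarrow> allocation \<times> prices) \<Rightarrow> qtree" where
  "qs [] acc F = Output (fst (F acc)) (snd (F acc))"
| "qs ((i,S)#L) acc F = Query i S (\<lambda>r. qs L (acc(i := (acc i)(S := r))) F)"

lemma qs_nq: "num_queries v (qs L acc F) = length L"
  by (induction L arbitrary: acc) auto

lemma qs_run: "\<exists>w. (\<forall>(i,S)\<in>P \<union> set L. w i S = v i S) \<and> run v (qs L acc F) = F w"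
  if "\<forall>(i,S)\<in>P. acc i S = v i S"
  using that
proof (induction L arbitrary: acc P)
  case Nil
  then show ?case by auto
next
  case (Cons a L)
  obtain i S where a: "a = (i,S)" by fastforce
  let ?acc = "acc(i := (acc i)(S := v i S))"
  have "\<forall>(j,T)\<in>insert (i,S) P. ?acc j T = v j T" using Cons.prems by auto
  from Cons.IH[OF this] obtain w where "(\<forall>(j,T)\<in>insert (i,S) P \<union> set L. w j T = v j T)"
     "run v (qs L ?acc F) = F w" by blast
  then show ?case using a by (intro exI[of _ w]) auto
qed

definition kk :: "nat \<Rightarrow> nat" where "kk m = (LEAST k. m < 2^((k+1)*(k+1)))"
definition bs :: "nat \<Rightarrow> nat" where "bs m = m div (kk m * kk m) + 1"
definition nb :: "nat \<Rightarrow> nat" where "nb m = m div bs m + 1"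
definition cov :: "nat \<Rightarrow> nat set \<Rightarrow> nat set" where "cov m R = {j \<in> items m. j div bs m \<in> R}"
definition CS :: "nat \<Rightarrow> nat set set" where "CS m = cov m ` Pow {..<nb m}"
definition CA :: "nat \<Rightarrow> nat \<Rightarrow> allocation set" where
  "CA n m = {x. (\<forall>i\<in>{1..n}. x i \<in> CS m) \<and> (\<forall>i\<in>{1..n}. \<forall>j\<in>{1..n}. i\<noteq>j \<longrightarrow> x i \<inter> x j = {})
     \<and> x 0 = items m - (\<Union>i\<in>{1..n}. x i) \<and> (\<forall>i. i > n \<longrightarrow> x i = {})}"
definition ff :: "nat \<Rightarrow> valuations \<Rightarrow> allocation \<Rightarrow> real" where "ff n w x = (\<Sum>i=1..n. w i (x i))"
definition opt :: "nat \<Rightarrow> nat \<Rightarrow> valuations \<Rightarrow> allocation" where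
  "opt n m w = (SOME x. x \<in> CA n m \<and> (\<forall>y\<in>CA n m. ff n w y \<le> ff n w x))"
definition pr :: "nat \<Rightarrow> nat \<Rightarrow> valuations \<Rightarrow> prices" where
  "pr n m w = (\<lambda>k. if k = 0 then 1 + (\<Sum>i=1..n. w i (items m)) else w k (opt n m w k))"
definition LLi :: "nat \<Rightarrow> nat \<Rightarrow> (nat \<times> nat set) list" where
  "LLi m i = map (\<lambda>R. (i, cov m (set R))) (subseqs [0..<nb m])"
definition LL :: "nat \<Rightarrow> nat \<Rightarrow> (nat \<times> nat set) list" where
  "LL n m = concat (map (LLi m) [1..<n+1])"
definition AA :: "nat \<Rightarrow> nat \<Rightarrow> qtree" where
  "AA n m = qs (LL n m) (\<lambda>_ _. 0) (\<lambda>w. (opt n m w, pr n m w))"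

lemma length_LL: "length (LL n m) = n * 2 ^ nb m"
  unfolding LL_def by (induction n) (simp_all add: length_subseqs LLi_def)

lemma LL_set: "i \<in> {1..n} \<Longrightarrow> S \<in> CS m \<Longrightarrow> (i,S) \<in> set (LL n m)"
proof -
  assume i: "i \<in> {1..n}" and S: "S \<in> CS m"
  then obtain R where R: "R \<subseteq> {..<nb m}" "S = cov m R" unfolding CS_def by auto
  then have "R \<in> set ` set (subseqs [0..<nb m])" by (intro subset_subseqs) auto
  then obtain r where "r \<in> set (subseqs [0..<nb m])" "R = set r" by auto
  then have "(i, S) \<in> set (LLi m i)" using R unfolding LLi_def by auto
  moreover have "i \<in> set [1..<n+1]" using i by auto
  moreover have "set (LL n m) = (\<Union>i\<in>set [1..<n+1]. set (LLi m i))" unfolding LL_def by simp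
  ultimately show ?thesis by blast
qed

lemma run_AA: "\<exists>w. (\<forall>i\<in>{1..n}. \<forall>S\<in>CS m. w i S = v i S) \<and> run v (AA n m) = (opt n m w, pr n m w)"
proof -
  from qs_run[of "{}" "\<lambda>_ _. 0" v "LL n m" "\<lambda>w. (opt n m w, pr n m w)"]
  obtain w where "\<forall>(i,S)\<in>set (LL n m). w i S = v i S" "run v (AA n m) = (opt n m w, pr n m w)"
    unfolding AA_def by auto
  then show ?thesis using LL_set by (intro exI[of _ w]) fastforce
qed



definition bclosed :: "nat \<Rightarrow> nat set \<Rightarrow> bool" where
  "bclosed m S \<longleftrightarrow> S \<subseteq> items m \<and> (\<forall>j\<in>S. \<forall>j'\<in>items m. j' div bs m = j div bs m \<longrightarrow> j' \<in> S)"

lemma CS_iff: "S \<in> CS m \<longleftrightarrow> bclosed m S"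
proof
  assume "S \<in> CS m"
  then show "bclosed m S" unfolding CS_def cov_def bclosed_def by auto
next
  assume b: "bclosed m S"
  let ?R = "(\<lambda>j. j div bs m) ` S"
  have "?R \<subseteq> {..<nb m}"
  proof
    fix r assume "r \<in> ?R"
    then obtain j where "j \<in> S" "r = j div bs m" by auto
    then have "j < m" using b unfolding bclosed_def items_def by auto
    then have "j div bs m \<le> m div bs m" by (simp add: div_le_mono)
    then show "r \<in> {..<nb m}" using \<open>r = _\<close> unfolding nb_def by auto
  qed
  moreover have "S = cov m ?R" using b unfolding cov_def bclosed_def by auto
  ultimately show "S \<in> CS m" unfolding CS_def by auto
qed

lemma CS_sub: "S \<in> CS m \<Longrightarrow> S \<subseteq> items m"
  by (simp add: CS_iff bclosed_def)

lemma CS_empty: "{} \<in> CS m" by (simp add: CS_iff bclosed_def)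
lemma CS_items: "items m \<in> CS m" by (simp add: CS_iff bclosed_def)
lemma CS_Un: "A \<in> CS m \<Longrightarrow> B \<in> CS m \<Longrightarrow> A \<union> B \<in> CS m"
  by (simp add: CS_iff bclosed_def) blast
lemma CS_UN: "\<forall>k\<in>T. X k \<in> CS m \<Longrightarrow> (\<Union>k\<in>T. X k) \<in> CS m"
  by (simp add: CS_iff bclosed_def) blast

lemma finite_CS: "finite (CS m)" unfolding CS_def by auto

lemma finite_CA: "finite (CA n m)"
proof -
  let ?g = "\<lambda>x. restrict x {0..n}"
  have "inj_on ?g (CA n m)"
  proof
    fix x y assume x: "x \<in> CA n m" and y: "y \<in> CA n m" and e: "?g x = ?g y"
    show "x = y"
    proof
      fix i show "x i = y i"
      proof (cases "i \<le> n")
        case True then show ?thesis using fun_cong[OF e, of i] by auto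
      next
        case False then show ?thesis using x y unfolding CA_def by auto
      qed
    qed
  qed
  moreover have "?g ` CA n m \<subseteq> PiE {0..n} (\<lambda>_. Pow (items m))"
  proof
    fix z assume "z \<in> ?g ` CA n m"
    then obtain x where x: "x \<in> CA n m" "z = ?g x" by auto
    have "x i \<subseteq> items m" if "i \<in> {0..n}" for i
    proof (cases "i = 0")
      case True then show ?thesis using x unfolding CA_def by auto
    next
      case False then show ?thesis using x that CS_sub unfolding CA_def by auto
    qed
    then show "z \<in> PiE {0..n} (\<lambda>_. Pow (items m))" using x by auto
  qed
  moreover have "finite (PiE {0..n} (\<lambda>_. Pow (items m)))"
    by (intro finite_PiE) (auto simp: items_def)
  ultimately show ?thesis by (meson finite_imageD finite_subset)
qed

definition x0 :: "nat \<Rightarrow> allocation" where "x0 m = (\<lambda>i. if i = 0 then items m else {})"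

lemma x0_CA: "x0 m \<in> CA n m"
  unfolding CA_def x0_def using CS_empty by auto

lemma opt_prop: "opt n m w \<in> CA n m \<and> (\<forall>y\<in>CA n m. ff n w y \<le> ff n w (opt n m w))"
proof -
  have "\<exists>x. x \<in> CA n m \<and> (\<forall>y\<in>CA n m. ff n w y \<le> ff n w x)"
  proof -
    have ne: "ff n w ` CA n m \<noteq> {}" using x0_CA by auto
    have fi: "finite (ff n w ` CA n m)" using finite_CA by auto
    obtain x where "x \<in> CA n m" "ff n w x = Max (ff n w ` CA n m)"
      using Max_in[OF fi ne] by auto
    then show ?thesis using fi by (intro exI[of _ x]) auto
  qed
  then show ?thesis unfolding opt_def by (rule someI_ex)
qed



lemma ff_eq: "\<forall>i\<in>{1..n}. \<forall>S\<in>CS m. w i S = v i S \<Longrightarrow> y \<in> CA n m \<Longrightarrow> ff n w y = ff n v y"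
  unfolding ff_def CA_def by (intro sum.cong) auto

lemma opt_v:
  assumes W: "\<forall>i\<in>{1..n}. \<forall>S\<in>CS m. w i S = v i S"
  shows "opt n m w \<in> CA n m" "\<And>y. y \<in> CA n m \<Longrightarrow> ff n v y \<le> ff n v (opt n m w)"
  using opt_prop[of n m w] ff_eq[OF W] by auto

lemma CA_alloc: "x \<in> CA n m \<Longrightarrow> is_allocation n m x"
proof -
  assume x: "x \<in> CA n m"
  have sub: "x i \<subseteq> items m" if "i \<in> {0..n}" for i
    using x that CS_sub unfolding CA_def by (cases "i = 0") auto
  have "\<forall>k\<in>{0..n}. \<forall>l\<in>{0..n}. k \<noteq> l \<longrightarrow> x k \<inter> x l = {}"
  proof (intro ballI impI)
    fix k l assume k: "k \<in> {0..n}" and l: "l \<in> {0..n}" and kl: "k \<noteq> l"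
    have d: "x 0 \<inter> x i = {}" if "i \<in> {1..n}" for i using x that unfolding CA_def by auto
    show "x k \<inter> x l = {}"
    proof (cases "k = 0")
      case True then show ?thesis using d[of l] l kl by auto
    next
      case False
      show ?thesis
      proof (cases "l = 0")
        case True then show ?thesis using d[of k] k False by auto
      next
        case False2: False
        then show ?thesis using x k l kl False unfolding CA_def by auto
      qed
    qed
  qed
  moreover have "(\<Union>k\<in>{0..n}. x k) = items m"
  proof
    show "(\<Union>k\<in>{0..n}. x k) \<subseteq> items m" using sub by (intro UN_least) auto
    show "items m \<subseteq> (\<Union>k\<in>{0..n}. x k)"
    proof
      fix j assume "j \<in> items m"
      show "j \<in> (\<Union>k\<in>{0..n}. x k)"
      proof (cases "\<exists>i\<in>{1..n}. j \<in> x i")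
        case True
        then obtain i where "i \<in> {1..n}" "j \<in> x i" by blast
        then show ?thesis by auto
      next
        case False
        then have "j \<in> x 0" using x \<open>j \<in> items m\<close> unfolding CA_def by blast
        then show ?thesis by auto
      qed
    qed
  qed
  ultimately show ?thesis unfolding is_allocation_def by blast
qed

lemma cwe:
  assumes V: "\<forall>i\<in>{1..n}. valuation m (v i) \<and> super_additive m (v i)"
    and W: "\<forall>i\<in>{1..n}. \<forall>S\<in>CS m. w i S = v i S"
  shows "is_CWE n m v (opt n m w) (pr n m w)"
proof -
  define x where "x = opt n m w"
  have xCA: "x \<in> CA n m" and xmax: "\<And>y. y \<in> CA n m \<Longrightarrow> ff n v y \<le> ff n v x"
    using opt_v[OF W] unfolding x_def by auto
  have xCS: "x i \<in> CS m" if "i \<in> {1..n}" for i using xCA that unfolding CA_def by auto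
  have xsub: "x i \<subseteq> items m" if "i \<in> {0..n}" for i
    using xCA that CS_sub unfolding CA_def by (cases "i = 0") auto
  have xdisj: "x i \<inter> x j = {}" if "i \<in> {0..n}" "j \<in> {0..n}" "i \<noteq> j" for i j
    using CA_alloc[OF xCA] that unfolding is_allocation_def by auto
  have vnn: "v i S \<ge> 0" if "i \<in> {1..n}" "S \<subseteq> items m" for i S
    using V that unfolding valuation_def by auto
  have vmono: "v i S \<le> v i T" if "i \<in> {1..n}" "S \<subseteq> T" "T \<subseteq> items m" for i S T
    using V that unfolding valuation_def by auto
  have v0: "v i {} = 0" if "i \<in> {1..n}" for i using V that unfolding valuation_def by auto
  define p where "p = pr n m w"
  have p0: "p 0 = 1 + (\<Sum>i=1..n. v i (items m))"
    unfolding p_def pr_def using W CS_items by simp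
  have pk: "p k = v k (x k)" if "k \<in> {1..n}" for k
    unfolding p_def pr_def x_def using W xCS[OF that] that by (simp add: x_def)
  have pnn: "p k \<ge> 0" if "k \<in> {0..n}" for k
  proof (cases "k = 0")
    case True
    have "(\<Sum>i=1..n. v i (items m)) \<ge> 0" using vnn by (intro sum_nonneg) auto
    then show ?thesis using True p0 by simp
  next
    case False then show ?thesis using pk[of k] vnn[of k "x k"] xsub[of k] that by auto
  qed
  have util: "utility v x p i = 0" if "i \<in> {1..n}" for i
    unfolding utility_def using pk[OF that] by simp
  have main: "v i (\<Union>k\<in>T. x k) \<le> (\<Sum>k\<in>T. p k)"
    if i: "i \<in> {1..n}" and T: "T \<subseteq> {k\<in>{0..n}. x k \<noteq> {}}" for i T
  proof (cases "0 \<in> T")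
    case True
    have fT: "finite T" using T by (intro finite_subset[of T "{0..n}"]) auto
    have "v i (\<Union>k\<in>T. x k) \<le> v i (items m)" using xsub T i by (intro vmono) auto
    also have "\<dots> \<le> (\<Sum>j=1..n. v j (items m))"
      using i vnn by (intro member_le_sum) auto
    also have "\<dots> \<le> p 0" using p0 by simp
    also have "\<dots> \<le> (\<Sum>k\<in>T. p k)"
      using True fT T pnn by (intro member_le_sum) auto
    finally show ?thesis .
  next
    case False
    have T1: "T \<subseteq> {1..n}"
    proof
      fix k assume "k \<in> T"
      then have "k \<noteq> 0" "k \<le> n" using False T by auto
      then show "k \<in> {1..n}" by auto
    qed
    have fT: "finite T" using T1 finite_subset by auto
    show ?thesis
    proof (rule ccontr)
      assume "\<not> ?thesis"
      then have gt: "v i (\<Union>k\<in>T. x k) > (\<Sum>k\<in>T. v k (x k))"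
        using pk T1 by (smt (verit, ccfv_SIG) subsetD sum.cong)
      define U where "U = (\<Union>k\<in>T. x k) \<union> x i"
      define D where "D = insert i T"
      define y where "y = (\<lambda>j. if j = i then U else if j \<in> T then {} else if j = 0 then
            items m - (\<Union>l\<in>{1..n}. (if l = i then U else if l \<in> T then {} else x l)) else x j)"
      have D1: "D \<subseteq> {1..n}" using T1 i unfolding D_def by auto
      have UCS: "U \<in> CS m" unfolding U_def using xCS T1 i by (intro CS_Un CS_UN) auto
      have yCA: "y \<in> CA n m"
      proof -
        have "y j \<in> CS m" if "j \<in> {1..n}" for j
          using that UCS xCS CS_empty unfolding y_def by auto
        moreover have "y a \<inter> y b = {}" if "a \<in> {1..n}" "b \<in> {1..n}" "a \<noteq> b" for a b
        proof -
          have dj: "x a \<inter> x b = {}" if "a \<in> {1..n}" "b \<in> {1..n}" "a \<noteq> b" for a b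
            using xdisj that by auto
          have "U \<inter> x c = {}" if "c \<in> {1..n}" "c \<noteq> i" "c \<notin> T" for c
            unfolding U_def using dj that T1 i by fastforce
          then show ?thesis using that dj unfolding y_def by (auto simp: Int_commute)
        qed
        moreover have "y 0 = items m - (\<Union>l\<in>{1..n}. y l)"
        proof -
          have i0: "i \<noteq> 0" and T0: "0 \<notin> T" using i T1 by auto
          have "(\<Union>l\<in>{1..n}. y l) = (\<Union>l\<in>{1..n}. (if l = i then U else if l \<in> T then {} else x l))"
            unfolding y_def by (intro SUP_cong) auto
          moreover have "y 0 = items m - (\<Union>l\<in>{1..n}. (if l = i then U else if l \<in> T then {} else x l))"
            using i0 T0 unfolding y_def by simp
          ultimately show ?thesis by simp
        qed
        moreover have "y j = {}" if "j > n" for j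
          using that xCA i T1 unfolding y_def CA_def by auto
        ultimately show ?thesis unfolding CA_def by auto
      qed
      have split: "ff n v z = (\<Sum>j\<in>{1..n} - D. v j (z j)) + (\<Sum>j\<in>D. v j (z j))" for z
        unfolding ff_def using D1 by (metis (no_types, lifting) add.commute finite_atLeastAtMost sum.subset_diff)
      have c1: "(\<Sum>j\<in>{1..n} - D. v j (y j)) = (\<Sum>j\<in>{1..n} - D. v j (x j))"
        unfolding y_def D_def by (intro sum.cong) auto
      have c2: "(\<Sum>j\<in>D. v j (y j)) = v i U"
      proof -
        have "(\<Sum>j\<in>D. v j (y j)) = v i (y i) + (\<Sum>j\<in>T - {i}. v j (y j))"
          unfolding D_def using fT by (simp add: sum.insert_remove)
        also have "(\<Sum>j\<in>T - {i}. v j (y j)) = 0"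
          using v0 T1 unfolding y_def by (intro sum.neutral) auto
        finally show ?thesis unfolding y_def by simp
      qed
      have c3: "v i U > (\<Sum>j\<in>D. v j (x j))"
      proof (cases "i \<in> T")
        case True
        then have "U = (\<Union>k\<in>T. x k)" "D = T" unfolding U_def D_def by auto
        then show ?thesis using gt by simp
      next
        case iT: False
        have "(\<Union>k\<in>T. x k) \<inter> x i = {}" using xdisj iT T1 i by fastforce
        moreover have "(\<Union>k\<in>T. x k) \<subseteq> items m" using xsub T1 by force
        moreover have "x i \<subseteq> items m" using xsub i by auto
        ultimately have "v i U \<ge> v i (\<Union>k\<in>T. x k) + v i (x i)"
          using V i unfolding super_additive_def U_def by auto
        moreover have "(\<Sum>j\<in>D. v j (x j)) = v i (x i) + (\<Sum>k\<in>T. v k (x k))"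
          unfolding D_def using iT fT by simp
        ultimately show ?thesis using gt by simp
      qed
      have "ff n v y > ff n v x"
        using split[of y] split[of x] c1 c2 c3 by simp
      then show False using xmax[OF yCA] by simp
    qed
  qed
  show ?thesis
    unfolding is_CWE_def
    using CA_alloc[OF xCA] pnn util main unfolding x_def p_def by auto
qed



lemma greedy:
  fixes A :: "'a set" and w :: "'a \<Rightarrow> real" and D :: nat
  assumes "finite A" "\<forall>a\<in>A. w a \<ge> 0" "\<forall>a\<in>A. card {b\<in>A. b \<noteq> a \<and> R a b} \<le> D"
    "\<forall>a b. R a b \<longrightarrow> R b a"
  shows "\<exists>I\<subseteq>A. (\<forall>a\<in>I. \<forall>b\<in>I. a \<noteq> b \<longrightarrow> \<not> R a b) \<and> sum w A \<le> (D+1) * sum w I"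
  using assms
proof (induction "card A" arbitrary: A rule: less_induct)
  case less
  show ?case
  proof (cases "A = {}")
    case True then show ?thesis by auto
  next
    case False
    have fw: "finite (w ` A)" "w ` A \<noteq> {}" using less.prems(1) False by auto
    have "Max (w ` A) \<in> w ` A" using Max_in[OF fw] .
    then obtain a where a1: "a \<in> A" "w a = Max (w ` A)" by (metis imageE)
    have a: "a \<in> A" "\<forall>b\<in>A. w b \<le> w a" using a1 Max_ge[OF fw(1)] by auto
    define N where "N = {b\<in>A. b \<noteq> a \<and> R a b}"
    define A' where "A' = A - insert a N"
    have fA': "finite A'" using less.prems(1) unfolding A'_def by auto
    have "A' \<subset> A" using a(1) unfolding A'_def by auto
    then have cA': "card A' < card A" using less.prems(1) by (intro psubset_card_mono)
    have "\<forall>c\<in>A'. card {b\<in>A'. b \<noteq> c \<and> R c b} \<le> D"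
    proof
      fix c assume c: "c \<in> A'"
      have "card {b\<in>A'. b \<noteq> c \<and> R c b} \<le> card {b\<in>A. b \<noteq> c \<and> R c b}"
        using less.prems(1) unfolding A'_def by (intro card_mono) auto
      then show "card {b\<in>A'. b \<noteq> c \<and> R c b} \<le> D" using less.prems(3) c unfolding A'_def by fastforce
    qed
    then obtain I' where I': "I' \<subseteq> A'" "\<forall>x\<in>I'. \<forall>y\<in>I'. x \<noteq> y \<longrightarrow> \<not> R x y"
      "sum w A' \<le> (D+1) * sum w I'"
      using less.hyps[OF cA' fA'] less.prems(2,4) unfolding A'_def by auto
    define I where "I = insert a I'"
    have aI': "a \<notin> I'" using I'(1) unfolding A'_def by auto
    have indep: "\<forall>x\<in>I. \<forall>y\<in>I. x \<noteq> y \<longrightarrow> \<not> R x y"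
    proof (intro ballI impI)
      fix x y assume "x \<in> I" "y \<in> I" "x \<noteq> y"
      have na: "\<not> R a b" if "b \<in> I'" for b using that I'(1) aI' unfolding A'_def N_def by auto
      show "\<not> R x y"
        using \<open>x \<in> I\<close> \<open>y \<in> I\<close> \<open>x \<noteq> y\<close> I'(2) na less.prems(4) unfolding I_def by blast
    qed
    have fN: "finite N" using less.prems(1) unfolding N_def by auto
    have "sum w A = sum w A' + sum w (insert a N)"
      unfolding A'_def using sum.subset_diff[of "insert a N" A w] less.prems(1) a(1) unfolding N_def by auto
    also have "sum w (insert a N) \<le> real (card (insert a N)) * w a"
      using sum_bounded_above[of "insert a N" w "w a"] a unfolding N_def by auto
    also have "real (card (insert a N)) \<le> D + 1"
    proof -
      have "card (insert a N) \<le> card N + 1" using fN by (simp add: card_insert_if)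
      moreover have "card N \<le> D" using less.prems(3) a(1) unfolding N_def by auto
      ultimately show ?thesis by linarith
    qed
    then have "real (card (insert a N)) * w a \<le> (D+1) * w a"
      using less.prems(2) a(1) by (intro mult_right_mono) auto
    finally have "sum w A \<le> (D+1) * sum w I' + (D+1) * w a" using I'(3) by linarith
    also have "\<dots> = (D+1) * sum w I"
      unfolding I_def using aI' I'(1) fA' finite_subset
      by (simp add: distrib_left finite_subset)
    finally have fin: "sum w A \<le> (D+1) * sum w I" .
    have "I \<subseteq> A" using I'(1) a(1) unfolding I_def A'_def by blast
    then show ?thesis using indep fin by blast
  qed
qed



definition cl :: "nat \<Rightarrow> nat set \<Rightarrow> nat set" where
  "cl m S = {j \<in> items m. \<exists>j'\<in>S. j' div bs m = j div bs m}"

lemma bs_pos: "bs m > 0" unfolding bs_def by auto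

lemma cl_CS: "cl m S \<in> CS m"
  unfolding CS_iff bclosed_def cl_def by auto

lemma cl_sup: "S \<subseteq> items m \<Longrightarrow> S \<subseteq> cl m S"
  unfolding cl_def by auto

lemma blk_sub: "{j'. j' div bs m = q} \<subseteq> {q * bs m..<q * bs m + bs m}"
  proof
    fix j assume "j \<in> {j'. j' div bs m = q}"
    then have "j div bs m = q" by simp
    then show "j \<in> {q * bs m..<q * bs m + bs m}"
      using bs_pos[of m] div_mult_mod_eq[of j "bs m"] mod_less_divisor[OF bs_pos[of m], of j]
      by (auto simp: algebra_simps)
  qed

lemma finite_blk: "finite {j'. j' div bs m = q}"
  using blk_sub finite_subset by blast

lemma card_blk: "card {j'. j' div bs m = q} \<le> bs m"
proof -
  have "card {j'. j' div bs m = q} \<le> card {q * bs m..<q * bs m + bs m}"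
    using blk_sub by (intro card_mono) auto
  then show ?thesis by simp
qed

lemma card_cl: "finite S \<Longrightarrow> card (cl m S) \<le> card S * bs m"
proof -
  assume fS: "finite S"
  have "cl m S \<subseteq> (\<Union>j\<in>S. {j'. j' div bs m = j div bs m})" unfolding cl_def by auto
  moreover have "finite (\<Union>j\<in>S. {j'. j' div bs m = j div bs m})"
  proof -
    show ?thesis using fS finite_blk by blast
  qed
  ultimately have "card (cl m S) \<le> card (\<Union>j\<in>S. {j'. j' div bs m = j div bs m})"
    by (intro card_mono)
  also have "\<dots> \<le> (\<Sum>j\<in>S. card {j'. j' div bs m = j div bs m})"
    using fS by (intro card_UN_le)
  also have "\<dots> \<le> (\<Sum>j\<in>S. bs m)" by (intro sum_mono card_blk)
  finally show ?thesis by simp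
qed

lemma welfare:
  assumes V: "\<forall>i\<in>{1..n}. valuation m (v i) \<and> super_additive m (v i)"
    and W: "\<forall>i\<in>{1..n}. \<forall>S\<in>CS m. w i S = v i S"
    and Y: "is_allocation n m y"
  shows "social_welfare n v y \<le> (real (m div (kk m + 1)) + real (kk m * bs m) + 1) * ff n v (opt n m w)"
    and "ff n v (opt n m w) \<ge> 0"
proof -
  define x where "x = opt n m w"
  define g where "g = ff n v x"
  define k where "k = kk m"
  define s where "s = bs m"
  have xCA: "x \<in> CA n m" and xmax: "\<And>z. z \<in> CA n m \<Longrightarrow> ff n v z \<le> g"
    using opt_v[OF W] unfolding x_def g_def by auto
  have vnn: "v i S \<ge> 0" if "i \<in> {1..n}" "S \<subseteq> items m" for i S
    using V that unfolding valuation_def by auto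
  have vmono: "v i S \<le> v i T" if "i \<in> {1..n}" "S \<subseteq> T" "T \<subseteq> items m" for i S T
    using V that unfolding valuation_def by auto
  have v0: "v i {} = 0" if "i \<in> {1..n}" for i using V that unfolding valuation_def by auto
  have g0: "g \<ge> 0"
    unfolding g_def ff_def using xCA CS_sub vnn unfolding CA_def by (intro sum_nonneg) auto
  then show "ff n v (opt n m w) \<ge> 0" unfolding g_def x_def .
  have ysub: "y i \<subseteq> items m" if "i \<in> {0..n}" for i
    using Y that unfolding is_allocation_def by auto
  have ydisj: "y i \<inter> y j = {}" if "i \<in> {0..n}" "j \<in> {0..n}" "i \<noteq> j" for i j
    using Y that unfolding is_allocation_def by auto
  have fin_items: "finite (items m)" unfolding items_def by auto
  have pack: "(\<Sum>a\<in>I. v a (y a)) \<le> g"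
    if I: "I \<subseteq> {1..n}" and dj: "\<forall>a\<in>I. \<forall>b\<in>I. a \<noteq> b \<longrightarrow> cl m (y a) \<inter> cl m (y b) = {}" for I
  proof -
    define z where "z = (\<lambda>j. if j \<in> I then cl m (y j) else if j = 0 then items m - (\<Union>l\<in>I. cl m (y l)) else {})"
    have I0: "0 \<notin> I" using I by auto
    have U: "(\<Union>l\<in>{1..n}. z l) = (\<Union>l\<in>I. cl m (y l))"
      unfolding z_def using I by auto
    have zCA: "z \<in> CA n m"
    proof -
      have "z j \<in> CS m" if "j \<in> {1..n}" for j using cl_CS CS_empty unfolding z_def using that by auto
      moreover have "\<forall>i\<in>{1..n}. \<forall>j\<in>{1..n}. i \<noteq> j \<longrightarrow> z i \<inter> z j = {}"
        using dj unfolding z_def by auto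
      moreover have "z 0 = items m - (\<Union>l\<in>{1..n}. z l)" unfolding U using I0 unfolding z_def by simp
      moreover have "\<forall>j. j > n \<longrightarrow> z j = {}" using I unfolding z_def by auto
      ultimately show ?thesis unfolding CA_def by blast
    qed
    have "(\<Sum>a\<in>I. v a (y a)) \<le> (\<Sum>a\<in>I. v a (z a))"
    proof (intro sum_mono)
      fix a assume a: "a \<in> I"
      have "a \<in> {0..n}" using a I by auto
      then have "y a \<subseteq> cl m (y a)" by (intro cl_sup ysub)
      moreover have "cl m (y a) \<subseteq> items m" using CS_sub[OF cl_CS] .
      ultimately show "v a (y a) \<le> v a (z a)" using a I unfolding z_def by (intro vmono) auto
    qed
    also have "\<dots> = ff n v z"
      unfolding ff_def using I v0 by (intro sum.mono_neutral_left) (auto simp: z_def)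
    also have "\<dots> \<le> g" using xmax[OF zCA] .
    finally show ?thesis .
  qed
  define N where "N = {i\<in>{1..n}. y i \<noteq> {}}"
  define Lg where "Lg = {i\<in>N. card (y i) > k}"
  define Sm where "Sm = {i\<in>N. card (y i) \<le> k}"
  have fN: "finite N" unfolding N_def by auto
  have NLS: "N = Lg \<union> Sm" "Lg \<inter> Sm = {}" unfolding Lg_def Sm_def by auto
  have SW: "social_welfare n v y = (\<Sum>i\<in>Lg. v i (y i)) + (\<Sum>i\<in>Sm. v i (y i))"
  proof -
    have "social_welfare n v y = (\<Sum>i\<in>N. v i (y i))"
      unfolding social_welfare_def N_def using v0 by (intro sum.mono_neutral_right) auto
    also have "\<dots> = (\<Sum>i\<in>Lg. v i (y i)) + (\<Sum>i\<in>Sm. v i (y i))"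
      unfolding NLS(1) using NLS(2) fN NLS(1) by (intro sum.union_disjoint) auto
    finally show ?thesis .
  qed
  have cLg: "card Lg \<le> m div (k+1)"
  proof -
    have fLg: "finite Lg" using fN unfolding Lg_def by auto
    have "card Lg * (k+1) = (\<Sum>i\<in>Lg. k+1)" by simp
    also have "\<dots> \<le> (\<Sum>i\<in>Lg. card (y i))" unfolding Lg_def by (intro sum_mono) auto
    also have "\<dots> = card (\<Union>i\<in>Lg. y i)"
      using fLg ydisj ysub fin_items unfolding Lg_def N_def
      by (intro card_UN_disjoint[symmetric]) (auto intro: finite_subset)
    also have "\<dots> \<le> card (items m)"
      using ysub fin_items unfolding Lg_def N_def by (intro card_mono) auto
    also have "\<dots> = m" unfolding items_def by simp
    finally show ?thesis by (simp add: less_eq_div_iff_mult_less_eq)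
  qed
  have L: "(\<Sum>i\<in>Lg. v i (y i)) \<le> real (m div (k+1)) * g"
  proof -
    have "(\<Sum>i\<in>Lg. v i (y i)) \<le> (\<Sum>i\<in>Lg. g)"
    proof (intro sum_mono)
      fix i assume "i \<in> Lg"
      then have "(\<Sum>a\<in>{i}. v a (y a)) \<le> g" unfolding Lg_def N_def by (intro pack) auto
      then show "v i (y i) \<le> g" by simp
    qed
    also have "\<dots> = real (card Lg) * g" by simp
    also have "\<dots> \<le> real (m div (k+1)) * g" using cLg g0 by (intro mult_right_mono) auto
    finally show ?thesis .
  qed
  have S: "(\<Sum>i\<in>Sm. v i (y i)) \<le> real (k * s + 1) * g"
  proof -
    define R where "R = (\<lambda>a b. cl m (y a) \<inter> cl m (y b) \<noteq> {})"
    have fSm: "finite Sm" using fN unfolding Sm_def by auto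
    have deg: "\<forall>a\<in>Sm. card {b\<in>Sm. b \<noteq> a \<and> R a b} \<le> k * s"
    proof
      fix a assume a: "a \<in> Sm"
      define B where "B = {b\<in>Sm. b \<noteq> a \<and> R a b}"
      define f where "f = (\<lambda>b. SOME j. j \<in> y b \<and> j \<in> cl m (y a))"
      have fB: "f b \<in> y b \<and> f b \<in> cl m (y a)" if "b \<in> B" for b
      proof -
        from that obtain j where "j \<in> cl m (y a)" "j \<in> cl m (y b)" unfolding B_def R_def by auto
        then obtain ja jb where "ja \<in> y a" "jb \<in> y b" "ja div bs m = j div bs m" "jb div bs m = j div bs m"
          unfolding cl_def by auto
        moreover have "jb \<in> items m" using \<open>jb \<in> y b\<close> ysub that unfolding B_def Sm_def N_def by auto
        ultimately have "jb \<in> y b \<and> jb \<in> cl m (y a)" unfolding cl_def by auto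
        then show ?thesis unfolding f_def by (rule someI)
      qed
      have "inj_on f B"
      proof
        fix b1 b2 assume b: "b1 \<in> B" "b2 \<in> B" "f b1 = f b2"
        show "b1 = b2"
        proof (rule ccontr)
          assume "b1 \<noteq> b2"
          then have "y b1 \<inter> y b2 = {}" using b ydisj unfolding B_def Sm_def N_def by auto
          then show False using fB[OF b(1)] fB[OF b(2)] b(3) by auto
        qed
      qed
      moreover have "f ` B \<subseteq> cl m (y a)" using fB by auto
      moreover have "finite (cl m (y a))" using CS_sub[OF cl_CS] fin_items finite_subset by blast
      ultimately have "card B \<le> card (cl m (y a))" by (rule card_inj_on_le)
      also have "\<dots> \<le> card (y a) * s"
      proof -
        have "a \<in> {0..n}" using a unfolding Sm_def N_def by auto
        then have "finite (y a)" using ysub fin_items finite_subset by blast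
        then show ?thesis unfolding s_def by (rule card_cl)
      qed
      also have "\<dots> \<le> k * s" using a unfolding Sm_def by auto
      finally show "card {b\<in>Sm. b \<noteq> a \<and> R a b} \<le> k * s" unfolding B_def .
    qed
    have wnn: "\<forall>a\<in>Sm. v a (y a) \<ge> 0" using vnn ysub unfolding Sm_def N_def by auto
    have sym: "\<forall>a b. R a b \<longrightarrow> R b a" unfolding R_def by auto
    obtain I where I: "I \<subseteq> Sm" "\<forall>a\<in>I. \<forall>b\<in>I. a \<noteq> b \<longrightarrow> \<not> R a b"
      "(\<Sum>a\<in>Sm. v a (y a)) \<le> real (k*s+1) * (\<Sum>a\<in>I. v a (y a))"
      using greedy[OF fSm wnn deg sym] by auto
    have "(\<Sum>a\<in>I. v a (y a)) \<le> g"
      using I(1,2) unfolding R_def Sm_def N_def by (intro pack) auto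
    then have "real (k*s+1) * (\<Sum>a\<in>I. v a (y a)) \<le> real (k*s+1) * g"
      by (intro mult_left_mono) auto
    then show ?thesis using I(3) by linarith
  qed
  show "social_welfare n v y \<le> (real (m div (kk m + 1)) + real (kk m * bs m) + 1) * ff n v (opt n m w)"
    using SW L S unfolding g_def x_def k_def s_def by (simp add: algebra_simps)
qed



lemma kk1: "m < 2^((kk m+1)*(kk m+1))"
proof -
  have "m < 2^((m+1)*(m+1))"
  proof -
    have "m < 2^m" by (rule less_exp)
    also have "(2::nat)^m \<le> 2^((m+1)*(m+1))" by (intro power_increasing) (auto simp: algebra_simps)
    finally show ?thesis .
  qed
  then show ?thesis unfolding kk_def by (rule LeastI)
qed

lemma kk2: "kk m > 0 \<Longrightarrow> 2^(kk m * kk m) \<le> m"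
proof -
  assume k: "kk m > 0"
  have "\<not> m < 2^((kk m - 1 + 1)*(kk m - 1 + 1))"
    unfolding kk_def by (rule not_less_Least) (use k in \<open>simp add: kk_def\<close>)
  then show ?thesis using k by simp
qed

lemma nb_bound: "2 ^ nb m \<le> 4 * (m + 1)"
proof (cases "kk m = 0")
  case True
  then have "m < 2" using kk1[of m] by simp
  moreover have "bs m = 1" unfolding bs_def using True by simp
  ultimately have "nb m \<le> 2" unfolding nb_def by simp
  then have "(2::nat) ^ nb m \<le> 2^2" by (intro power_increasing) auto
  then show ?thesis by simp
next
  case False
  define k where "k = kk m"
  have kp: "k*k > 0" using False unfolding k_def by simp
  have "m < bs m * (k*k)"
  proof -
    have "m = (m div (k*k)) * (k*k) + m mod (k*k)" by (rule div_mult_mod_eq[symmetric])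
    also have "\<dots> < (m div (k*k)) * (k*k) + k*k" using kp by simp
    also have "\<dots> = bs m * (k*k)" unfolding bs_def k_def by (simp add: algebra_simps)
    finally show ?thesis .
  qed
  then have "m div bs m < k*k" using bs_pos[of m] by (simp add: div_less_iff_less_mult mult.commute)
  then have "nb m \<le> k*k" unfolding nb_def by simp
  then have "(2::nat) ^ nb m \<le> 2^(k*k)" by (intro power_increasing) auto
  also have "\<dots> \<le> m" using kk2[of m] False unfolding k_def by simp
  finally show ?thesis by simp
qed

lemma rdiv_le: "real (a div b) \<le> real a / real b"
proof (cases "b = 0")
  case True then show ?thesis by simp
next
  case False
  have "(a div b) * b \<le> a" by (rule div_times_less_eq_dividend)
  then have "real (a div b) * real b \<le> real a" by (metis of_nat_le_iff of_nat_mult)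
  then show ?thesis using False by (simp add: field_simps)
qed

lemma numeric:
  assumes m: "m \<ge> 1"
  shows "real (m div (kk m + 1)) + real (kk m * bs m) + 1 \<le> 12 * (real m / sqrt (ln (real m + 2)))"
proof (cases "kk m = 0")
  case True
  then have "m < 2" using kk1[of m] by simp
  then have m1: "m = 1" using m by simp
  have b: "bs m = 1" unfolding bs_def using True by simp
  have l3: "ln (3::real) \<le> 2" using ln_le_minus_one[of 3] by simp
  have l3p: "ln (3::real) > 0" by simp
  have "sqrt (ln 3) \<le> sqrt 2" using l3 by simp
  also have "sqrt 2 \<le> (2::real)" using real_sqrt_le_mono[of 2 4] real_sqrt_four by simp
  finally have sq: "sqrt (ln (3::real)) \<le> 2" .
  have sqp: "sqrt (ln (3::real)) > 0" using l3p by simp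
  have "(2::real) \<le> 12 / sqrt (ln 3)" using sq sqp by (simp add: field_simps)
  then show ?thesis using m1 True b by simp
next
  case False
  define k where "k = kk m"
  define K where "K = real k"
  have k1: "k \<ge> 1" using False unfolding k_def by simp
  have K1: "K \<ge> 1" using k1 unfolding K_def by simp
  have pm: "2^(k*k) \<le> m" using kk2[of m] False unfolding k_def by simp
  have kkm: "k*k \<le> m" using less_exp[of "k*k"] pm by linarith
  have KKm: "K*K \<le> real m" using kkm unfolding K_def by (metis of_nat_le_iff of_nat_mult)
  have kk1': "1 \<le> k*k" using k1 by (simp add: Suc_le_eq)
  have "(2::nat)^1 \<le> 2^(k*k)" using kk1' by (intro power_increasing) auto
  then have m2: "m \<ge> 2" using pm by simp
  have t1: "real (m div (k+1)) \<le> real m / K"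
  proof -
    have "real (m div (k+1)) \<le> real m / real (k+1)" by (rule rdiv_le)
    also have "\<dots> \<le> real m / K" unfolding K_def using K1 K_def
      by (intro divide_left_mono) auto
    finally show ?thesis .
  qed
  have t2: "real (k * bs m) \<le> real m / K + K"
  proof -
    have "real (m div (k*k)) \<le> real m / real (k*k)" by (rule rdiv_le)
    then have "real (bs m) \<le> real m / (K*K) + 1" unfolding bs_def k_def K_def by simp
    then have "K * real (bs m) \<le> K * (real m / (K*K) + 1)" using K1 by (intro mult_left_mono) auto
    also have "\<dots> = real m / K + K" using K1 by (simp add: field_simps)
    finally show ?thesis unfolding K_def by simp
  qed
  have t3: "K + 1 \<le> 2 * real m / K"
  proof -
    have "K \<le> K*K" using mult_left_mono[of 1 K K] K1 by simp
    then have "K * (K+1) \<le> 2 * real m" using KKm by (simp add: algebra_simps)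
    then show ?thesis using K1 by (simp add: field_simps)
  qed
  have lhs: "real (m div (kk m + 1)) + real (kk m * bs m) + 1 \<le> 4 * real m / K"
  proof -
    have e: "real (kk m * bs m) = real (k * bs m)" unfolding k_def by simp
    have e2: "4 * real m / K = real m / K + real m / K + 2 * real m / K" using K1 by (simp add: field_simps)
    show ?thesis using t1 t2 t3 e e2 unfolding k_def[symmetric] by linarith
  qed
  have lnpos: "ln (real m + 2) > 0" by simp
  have "ln (real m + 2) \<le> ln (real m * real m)"
  proof -
    have m2r: "real m \<ge> 2" using m2 by simp
    have "2 * real m \<le> real m * real m" using mult_right_mono[of 2 "real m" "real m"] m2r by simp
    then have le: "real m + 2 \<le> real m * real m" using m2r by linarith
    have "real m + 2 > 0" by simp
    then show ?thesis using le by (subst ln_le_cancel_iff) auto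
  qed
  also have "\<dots> = 2 * ln (real m)" using m2 by (simp add: ln_mult)
  also have "ln (real m) < real ((k+1)*(k+1)) * ln 2"
  proof -
    have "real m < 2 ^ ((k+1)*(k+1))" using kk1[of m] unfolding k_def
      by (metis of_nat_less_iff of_nat_numeral of_nat_power)
    then have "ln (real m) < ln (2 ^ ((k+1)*(k+1)))" using m2 by (intro ln_less_cancel_iff[THEN iffD2]) auto
    moreover have "ln ((2::real) ^ ((k+1)*(k+1))) = real ((k+1)*(k+1)) * ln 2"
      by (rule ln_realpow)
    ultimately show ?thesis by simp
  qed
  also have "real ((k+1)*(k+1)) * ln 2 \<le> real ((k+1)*(k+1))"
    using ln_2_less_1 by (intro mult_left_le) auto
  finally have "ln (real m + 2) < 2 * real ((k+1)*(k+1))" by simp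
  also have "real ((k+1)*(k+1)) = (K+1)*(K+1)" unfolding K_def by (simp add: algebra_simps)
  also have "2 * ((K+1)*(K+1)) \<le> (3*K)^2"
  proof -
    have a: "K \<le> K*K" using mult_left_mono[of 1 K K] K1 by simp
    have "2 * ((K+1)*(K+1)) = 2*(K*K) + 4*K + 2" by (simp add: algebra_simps)
    also have "\<dots> \<le> 9*(K*K)" using a K1 by linarith
    finally show ?thesis by (simp add: power2_eq_square)
  qed
  finally have "ln (real m + 2) < (3*K)^2" .
  then have "sqrt (ln (real m + 2)) < sqrt ((3*K)^2)" by (rule real_sqrt_less_mono)
  moreover have "sqrt ((3*K)^2) = 3*K" using K1 by (subst real_sqrt_abs) simp
  ultimately have sq: "sqrt (ln (real m + 2)) < 3*K" by linarith
  have sqp: "sqrt (ln (real m + 2)) > 0" using lnpos by simp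
  have "4 * real m / K \<le> 12 * (real m / sqrt (ln (real m + 2)))"
  proof -
    have "4 * real m / K = 12 * (real m / (3*K))" using K1 by simp
    also have "\<dots> \<le> 12 * (real m / sqrt (ln (real m + 2)))"
      using sq sqp K1 by (intro mult_left_mono divide_left_mono) (auto intro: mult_pos_pos)
    finally show ?thesis .
  qed
  then show ?thesis using lhs by linarith
qed



theorem theorem3:
  shows "\<exists>(A :: nat \<Rightarrow> nat \<Rightarrow> qtree) (c::real) (d::nat) (C::real). C > 0 \<and>
    (\<forall>n m (v :: valuations).
       (\<forall>i\<in>{1..n}. valuation m (v i) \<and> super_additive m (v i)) \<longrightarrow>
       real (num_queries v (A n m)) \<le> c * (real n + real m + 1) ^ d \<and>
       is_CWE n m v (fst (run v (A n m))) (snd (run v (A n m))) \<and>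
       (\<forall>y. is_allocation n m y \<longrightarrow>
          social_welfare n v y \<le>
            C * (real m / sqrt (ln (real m + 2))) * social_welfare n v (fst (run v (A n m)))))"
proof -
  have Q: "real (num_queries v (AA n m)) \<le> 4 * (real n + real m + 1) ^ 2" for n m v
  proof -
  have "num_queries v (AA n m) = n * 2 ^ nb m" unfolding AA_def qs_nq length_LL ..
  also have "\<dots> \<le> n * (4 * (m+1))" using nb_bound[of m] by (intro mult_left_mono) auto
  also have "\<dots> \<le> 4 * (n + m + 1)^2" by (simp add: power2_eq_square algebra_simps)
  finally have "real (num_queries v (AA n m)) \<le> real (4 * (n + m + 1)^2)" by (metis of_nat_le_iff)
  then show "real (num_queries v (AA n m)) \<le> 4 * (real n + real m + 1) ^ 2"
    by (simp only: of_nat_mult of_nat_power of_nat_add of_nat_1 of_nat_numeral)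
  qed
  have CW: "is_CWE n m v (fst (run v (AA n m))) (snd (run v (AA n m)))"
    if V: "\<forall>i\<in>{1..n}. valuation m (v i) \<and> super_additive m (v i)" for n m v
  proof -
  obtain w where W: "\<forall>i\<in>{1..n}. \<forall>S\<in>CS m. w i S = v i S" and R: "run v (AA n m) = (opt n m w, pr n m w)"
    using run_AA by blast
  show "is_CWE n m v (fst (run v (AA n m))) (snd (run v (AA n m)))"
    unfolding R using cwe[OF V W] by simp
  qed
  have SWB: "social_welfare n v y \<le> 12 * (real m / sqrt (ln (real m + 2))) * social_welfare n v (fst (run v (AA n m)))"
    if V: "\<forall>i\<in>{1..n}. valuation m (v i) \<and> super_additive m (v i)"
    and Y: "is_allocation n m y" for n m v y
  proof -
  obtain w where W: "\<forall>i\<in>{1..n}. \<forall>S\<in>CS m. w i S = v i S" and R: "run v (AA n m) = (opt n m w, pr n m w)"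
    using run_AA by blast
  have eq: "social_welfare n v (fst (run v (AA n m))) = ff n v (opt n m w)"
    unfolding R social_welfare_def ff_def by simp
  show "social_welfare n v y \<le> 12 * (real m / sqrt (ln (real m + 2))) * social_welfare n v (fst (run v (AA n m)))"
  proof (cases "m = 0")
    case True
    have "social_welfare n v y = 0"
      unfolding social_welfare_def
    proof (intro sum.neutral ballI)
      fix i assume i: "i \<in> {1..n}"
      then have "y i \<subseteq> items m" using Y unfolding is_allocation_def by auto
      then have "y i = {}" using True unfolding items_def by auto
      then show "v i (y i) = 0" using V i unfolding valuation_def by auto
    qed
    then show ?thesis using True by simp
  next
    case False
    have g0: "ff n v (opt n m w) \<ge> 0" using welfare(2)[OF V W Y] .
    have "social_welfare n v y \<le> (real (m div (kk m + 1)) + real (kk m * bs m) + 1) * ff n v (opt n m w)"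
      using welfare(1)[OF V W Y] .
    also have "\<dots> \<le> (12 * (real m / sqrt (ln (real m + 2)))) * ff n v (opt n m w)"
      using numeric[of m] False g0 by (intro mult_right_mono) auto
    finally show ?thesis unfolding eq .
  qed
  qed
  show ?thesis
    by (intro exI[of _ AA] exI[of _ "4::real"] exI[of _ "2::nat"] exI[of _ "12::real"] conjI allI impI zero_less_numeral Q CW SWB)
      assumption+
qed


end
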